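(* Let $H$ be a real Hilbert space, $M\ge 1$, $I=\{1,\dots,M\}$, and let $f_i,h_i,T_i$ ($i\in I$) satisfy Assumption (A1)–(A4) below, with parameter sequences $\{\theta_n\},\{\lambda_n\},\{\beta_n\},\{\alpha_n\}$ satisfying Condition (C) below. Suppose that for each $i\in I$, $X_i\subset H$ is a bounded, closed and convex set with $S\subset X_i$, where $S=\bigcap_{i=1}^M \mathrm{Fix}\,T_i$. Consider the Distributed Accelerated Incremental Algorithm described below, modified in one of the following two ways: either the step defining $y^{(i)}_n$ is replaced by $$y^{(i)}_{n}=P_{X_{i}}\big(\mathrm{prox}_{\lambda_{n}f_{i}}(z^{(i)}_{n}+\lambda_{n}d^{(i)}_{n+1})\big),$$ or the step defining $w^{(i+1)}_n$ is replaced by $$w^{(i+1)}_{n}=P_{X_{i}}\big(\alpha_{n}u^{(i)}+(1-\alpha_{n})T_{i}(y^{(i)}_{n})\big),$$ where $P_{X_i}$ denotes the metric projection onto $X_i$. Then for each $i\in I$ the sequence $\{y^{(i)}_n\}$ generated by the resulting algorithm is bounded.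
   Context: Assumption (A1): each $f_i:H\to\mathbb{R}$ is continuous and convex. (A2): each $h_i:H\to\mathbb{R}$ is convex and Fréchet differentiable, and $\nabla h_i$ is $(1/L_i)$-Lipschitz continuous for some $L_i>0$. (A3): each $T_i:H\to H$ is firmly nonexpansive, i.e. $\|T_ix-T_iy\|^2\le\langle T_ix-T_iy,x-y\rangle$ for all $x,y$. (A4): $S=\bigcap_{i=1}^M\mathrm{Fix}\,T_i\neq\emptyset$ (where $\mathrm{Fix}\,T_i=\{y:T_iy=y\}$) and, with $\psi=\sum_{i=1}^M(f_i+h_i)$, the set $\Omega=\{\hat x\in S:\psi(\hat x)=\min_{x\in S}\psi(x)\}$ is nonempty. Condition (C): $\{\theta_n\},\{\lambda_n\},\{\beta_n\},\{\alpha_n\}$ are decreasing real sequences converging to $0$ with $\theta_n\in[0,1)$, $\lambda_n\in(0,2\min_{i\in I}L_i]$, $\beta_n\in(0,1]$, $\alpha_n\in(0,1]$, and: (C1) $\sum_n\alpha_n=\infty$; (C2) $\lim_n\frac{1}{\alpha_{n+1}}\big|\frac{1}{\lambda_{n+1}}-\frac{1}{\lambda_n}\big|=0$; (C3) $\lim_n\frac{1}{\lambda_{n+1}}\big|1-\frac{\alpha_n}{\alpha_{n+1}}\big|=0$; (C4) $\lim_n\frac{\alpha_n}{\lambda_n}=0$; (C5) $\lim_n\frac{\theta_n}{\alpha_{n+1}\lambda_{n+1}}=0$; (C6) $\frac{\lambda_n}{\lambda_{n+1}}\le\sigma$ for some $\sigma\ge1$ and all $n$; (C7) $\lim_n\frac{\beta_n}{\alpha_{n+1}}=0$.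 For proper lsc convex $g$ and $\lambda>0$, $\mathrm{prox}_{\lambda g}(x)=\arg\min_y\{g(y)+\frac{1}{2\lambda}\|x-y\|^2\}$. Distributed Accelerated Incremental Algorithm: choose $x_1\in H$, $w^{(i)}_0,z^{(i)}_0,u^{(i)}\in H$ and set $d^{(i)}_1=-\nabla h_i(z^{(i)}_0)$ ($i\in I$). For $n=1,2,\dots$: set $w^{(1)}_n=x_n$; for $i=1,\dots,M$ compute $z^{(i)}_n=w^{(i)}_n+\theta_n(w^{(i)}_n-w^{(i)}_{n-1})$, $d^{(i)}_{n+1}=-\nabla h_i(z^{(i)}_n)+\beta_nd^{(i)}_n$, $y^{(i)}_n=\mathrm{prox}_{\lambda_nf_i}(z^{(i)}_n+\lambda_nd^{(i)}_{n+1})$, $w^{(i+1)}_n=\alpha_nu^{(i)}+(1-\alpha_n)T_i(y^{(i)}_n)$; then set $x_{n+1}=w^{(M+1)}_n$. *)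

theory Defs
  imports "HOL-Analysis.Analysis"
begin

text \<open>Metric projection onto a set X (in a real Hilbert space; unique for
  nonempty closed convex X).\<close>
definition metric_proj :: "'a::real_inner set \<Rightarrow> 'a \<Rightarrow> 'a" where
  "metric_proj X x = (THE p. p \<in> X \<and> (\<forall>q\<in>X. norm (x - p) \<le> norm (x - q)))"

definition prox :: "real \<Rightarrow> ('a::real_inner \<Rightarrow> real) \<Rightarrow> 'a \<Rightarrow> 'a" where
  "prox l g x = (THE p. \<forall>q. g p + (norm (x - p))\<^sup>2 / (2 * l) \<le> g q + (norm (x - q))\<^sup>2 / (2 * l))"

definition firmly_nonexpansive :: "('a::real_inner \<Rightarrow> 'a) \<Rightarrow> bool" where
  "firmly_nonexpansive T \<longleftrightarrow> (\<forall>x y. (norm (T x - T y))\<^sup>2 \<le> inner (T x - T y) (x - y))"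

end

theory Submission
  imports Defs
begin


lemma mid_norm:
  fixes v a b :: "'a::real_inner"
  shows "(norm (v - (1/2) *\<^sub>R (a + b)))\<^sup>2 = ((norm (v - a))\<^sup>2 + (norm (v - b))\<^sup>2) / 2 - (norm (a - b))\<^sup>2 / 4"
  by (simp add: power2_norm_eq_inner inner_simps inner_commute algebra_simps field_simps)

lemma strong_min_exists:
  fixes g :: "'a::{real_inner,complete_space} \<Rightarrow> real"
  assumes K: "convex K" "closed K" "K \<noteq> {}" and cont: "continuous_on K g"
    and bdd: "\<And>p. p \<in> K \<Longrightarrow> g p \<ge> lb" and mu: "\<mu> > 0"
    and sc: "\<And>a b. a \<in> K \<Longrightarrow> b \<in> K \<Longrightarrow> g ((1/2) *\<^sub>R (a + b)) \<le> (g a + g b) / 2 - \<mu> * (norm (a - b))\<^sup>2"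
  shows "\<exists>!p. p \<in> K \<and> (\<forall>q\<in>K. g p \<le> g q)"
proof -
  have midK: "(1/2) *\<^sub>R (a + b) \<in> K" if "a \<in> K" "b \<in> K" for a b
  proof -
    have "(1 - 1/2) *\<^sub>R a + (1/2) *\<^sub>R b \<in> K" using K(1) that by (intro convexD) auto
    thus ?thesis by (simp add: algebra_simps)
  qed
  define m where "m = Inf (g ` K)"
  have bb: "bdd_below (g ` K)" using bdd by (auto simp: bdd_below_def)
  have mle: "m \<le> g q" if "q \<in> K" for q unfolding m_def using bb that by (simp add: cInf_lower)
  have "\<exists>p. p \<in> K \<and> g p < m + 1 / (real k + 1)" for k
  proof -
    have "Inf (g ` K) < m + 1 / (real k + 1)" unfolding m_def by simp
    from cInf_lessD[OF _ this] K(3) obtain r where "r \<in> g ` K" "r < m + 1 / (real k + 1)"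
      by auto
    thus ?thesis by auto
  qed
  then obtain s where s: "\<And>k. s k \<in> K" "\<And>k. g (s k) < m + 1 / (real k + 1)" by metis
  have Cs: "Cauchy s"
  proof (rule CauchyI)
    fix e :: real assume e: "e > 0"
    obtain N :: nat where N: "1 / (real N + 1) < \<mu> * e\<^sup>2"
    proof -
      obtain N where "inverse (real (Suc N)) < \<mu> * e\<^sup>2" using reals_Archimedean e mu by (metis mult_pos_pos zero_less_power)
      thus ?thesis using that by (simp add: inverse_eq_divide add.commute)
    qed
    show "\<exists>N. \<forall>i\<ge>N. \<forall>j\<ge>N. norm (s i - s j) < e"
    proof (intro exI allI impI)
      fix i j assume ij: "N \<le> i" "N \<le> j"
      have a: "1 / (real i + 1) \<le> 1 / (real N + 1)" "1 / (real j + 1) \<le> 1 / (real N + 1)"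
        using ij by (auto simp: frac_le)
      have "\<mu> * (norm (s i - s j))\<^sup>2 \<le> (g (s i) + g (s j)) / 2 - g ((1/2) *\<^sub>R (s i + s j))"
        using sc[OF s(1)[of i] s(1)[of j]] by simp
      also have "\<dots> \<le> (g (s i) + g (s j)) / 2 - m" using mle[OF midK[OF s(1)[of i] s(1)[of j]]] by simp
      also have "\<dots> < 1 / (real N + 1)"
      proof -
        have "g (s i) < m + 1 / (real N + 1)" using s(2)[of i] a(1) by linarith
        moreover have "g (s j) < m + 1 / (real N + 1)" using s(2)[of j] a(2) by linarith
        ultimately show ?thesis by (simp add: field_simps)
      qed
      also have "\<dots> < \<mu> * e\<^sup>2" by (rule N)
      finally have "(norm (s i - s j))\<^sup>2 < e\<^sup>2" using mu by simp
      thus "norm (s i - s j) < e" using e by (simp add: power_less_imp_less_base)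
    qed
  qed
  then obtain p where p: "s \<longlonglongrightarrow> p" using convergent_eq_Cauchy by blast
  have pK: "p \<in> K" using closed_sequentially[OF K(2) s(1) p] .
  have t1: "(\<lambda>k. g (s k)) \<longlonglongrightarrow> g p"
    by (rule continuous_on_tendsto_compose[OF cont p pK]) (simp add: s(1))
  have t2: "(\<lambda>k. g (s k)) \<longlonglongrightarrow> m"
  proof (rule real_tendsto_sandwich[where f="\<lambda>k. m" and h="\<lambda>k. m + 1 / (real k + 1)"])
    show "\<forall>\<^sub>F k in sequentially. m \<le> g (s k)" using mle s(1) by simp
    show "\<forall>\<^sub>F k in sequentially. g (s k) \<le> m + 1 / (real k + 1)" by (intro always_eventually allI less_imp_le[OF s(2)])
    show "(\<lambda>k. m) \<longlonglongrightarrow> m" by simp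
    have "True" by simp
    then show "(\<lambda>k. m + 1 / (real k + 1)) \<longlonglongrightarrow> m" using LIMSEQ_inverse_real_of_nat_add[of m] by (simp add: inverse_eq_divide add.commute)
  qed
  have gp: "g p = m" using LIMSEQ_unique[OF t1 t2] .
  show ?thesis
  proof (rule ex1I[of _ p])
    show "p \<in> K \<and> (\<forall>q\<in>K. g p \<le> g q)" using pK gp mle by auto
  next
    fix p' assume p': "p' \<in> K \<and> (\<forall>q\<in>K. g p' \<le> g q)"
    have "\<mu> * (norm (p' - p))\<^sup>2 \<le> (g p' + g p) / 2 - g ((1/2) *\<^sub>R (p' + p))"
      using sc[of p' p] p' pK by simp
    also have "\<dots> \<le> 0" using p' pK midK[of p' p] mle gp by force
    finally have "(norm (p' - p))\<^sup>2 \<le> 0" using mu by (simp add: mult_le_0_iff)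
    thus "p' = p" by simp
  qed
qed

lemma metric_proj_in:
  fixes X :: "'a::{real_inner,complete_space} set"
  assumes "convex X" "closed X" "X \<noteq> {}"
  shows "metric_proj X v \<in> X"
proof -
  have ex: "\<exists>!p. p \<in> X \<and> (\<forall>q\<in>X. (\<lambda>p. (norm (v - p))\<^sup>2) p \<le> (\<lambda>p. (norm (v - p))\<^sup>2) q)"
  proof (rule strong_min_exists[OF assms, where lb=0 and \<mu>="1/4"])
    show "continuous_on X (\<lambda>p. (norm (v - p))\<^sup>2)" by (intro continuous_intros)
    fix a b
    show "(norm (v - (1/2) *\<^sub>R (a + b)))\<^sup>2 \<le> ((norm (v - a))\<^sup>2 + (norm (v - b))\<^sup>2) / 2 - 1/4 * (norm (a - b))\<^sup>2"
      by (simp add: mid_norm)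
  qed auto
  have eq: "(norm (v - p))\<^sup>2 \<le> (norm (v - q))\<^sup>2 \<longleftrightarrow> norm (v - p) \<le> norm (v - q)" for p q
    by (simp add: abs_le_square_iff[symmetric])
  have "\<exists>!p. p \<in> X \<and> (\<forall>q\<in>X. norm (v - p) \<le> norm (v - q))"
    using ex unfolding eq .
  from theI'[OF this] show ?thesis unfolding metric_proj_def by blast
qed

lemma convex_lower_bound:
  fixes g :: "'a::real_normed_vector \<Rightarrow> real"
  assumes cv: "convex_on UNIV g" and ct: "continuous_on UNIV g"
  shows "\<exists>\<kappa>>0. \<forall>p. g p \<ge> g 0 - 1 - \<kappa> * norm p"
proof -
  obtain \<delta> where d: "\<delta> > 0" "\<And>p. dist p 0 < \<delta> \<Longrightarrow> dist (g p) (g 0) < 1"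
    using ct unfolding continuous_on_iff by (metis UNIV_I zero_less_one)
  have near: "g p > g 0 - 1" if "norm p < \<delta>" for p
    using d(2)[of p] that by (simp add: dist_real_def)
  show ?thesis
  proof (intro exI[of _ "2/\<delta>"] conjI allI)
    show "0 < 2 / \<delta>" using d by simp
    fix p :: 'a
    show "g 0 - 1 - 2 / \<delta> * norm p \<le> g p"
    proof (cases "norm p < \<delta>")
      case True
      thus ?thesis using near[OF True] d(1) by (smt (verit) divide_nonneg_nonneg mult_nonneg_nonneg norm_ge_zero)
    next
      case False
      hence np: "norm p \<ge> \<delta>" "norm p > 0" using d by auto
      define t where "t = \<delta> / (2 * norm p)"
      have t: "0 < t" "t \<le> 1" using np d(1) by (auto simp: t_def field_simps)
      have "norm (t *\<^sub>R p) = \<delta> / 2" using np d(1) by (simp add: t_def)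
      hence "g (t *\<^sub>R p) > g 0 - 1" using near d(1) by simp
      moreover have "g ((1 - t) *\<^sub>R 0 + t *\<^sub>R p) \<le> (1 - t) * g 0 + t * g p"
        using convex_onD[OF cv, of t 0 p] t by simp
      ultimately have "t * g p > t * g 0 - 1" by (simp add: algebra_simps)
      hence "g p > g 0 - 1 / t" using t(1) by (simp add: field_simps)
      moreover have "1 / t = 2 / \<delta> * norm p" using np d(1) by (simp add: t_def)
      ultimately show ?thesis by simp
    qed
  qed
qed

lemma prox_min:
  fixes f :: "'a::{real_inner,complete_space} \<Rightarrow> real"
  assumes l: "l > 0" and cv: "convex_on UNIV f" and ct: "continuous_on UNIV f"
  shows "\<forall>q. f (prox l f v) + (norm (v - prox l f v))\<^sup>2 / (2 * l) \<le> f q + (norm (v - q))\<^sup>2 / (2 * l)"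
proof -
  obtain \<kappa> where k: "\<kappa> > 0" "\<And>p. f p \<ge> f 0 - 1 - \<kappa> * norm p"
    using convex_lower_bound[OF cv ct] by blast
  define G where "G p = f p + (norm (v - p))\<^sup>2 / (2 * l)" for p
  have "\<exists>!p. p \<in> UNIV \<and> (\<forall>q\<in>UNIV. G p \<le> G q)"
  proof (rule strong_min_exists[where lb="f 0 - 1 - \<kappa> * norm v - l * \<kappa>\<^sup>2 / 2" and \<mu>="1 / (8 * l)"])
    show "continuous_on UNIV G" unfolding G_def by (intro continuous_intros ct) (use l in auto)
    show "0 < 1 / (8 * l)" using l by simp
    fix p :: 'a
    have s1: "norm p \<le> norm (v - p) + norm v" by (metis norm_triangle_sub add.commute norm_minus_commute)
    have s2: "(norm (v - p))\<^sup>2 / (2 * l) - \<kappa> * norm (v - p) \<ge> - (l * \<kappa>\<^sup>2 / 2)"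
    proof -
      have "0 \<le> (norm (v - p) - l * \<kappa>)\<^sup>2" by simp
      hence "0 \<le> ((norm (v - p))\<^sup>2 - 2 * l * \<kappa> * norm (v - p) + l\<^sup>2 * \<kappa>\<^sup>2) / (2 * l)"
        using l by (simp add: power2_diff power_mult_distrib algebra_simps)
      thus ?thesis using l by (simp add: field_simps power2_eq_square)
    qed
    have "\<kappa> * norm p \<le> \<kappa> * norm (v - p) + \<kappa> * norm v" using mult_left_mono[OF s1, of \<kappa>] k(1) by (simp add: distrib_left)
    thus "f 0 - 1 - \<kappa> * norm v - l * \<kappa>\<^sup>2 / 2 \<le> G p"
      unfolding G_def using k(2)[of p] s2 by linarith
  next
    fix a b :: 'a
    have fm: "f ((1/2) *\<^sub>R (a + b)) \<le> (f a + f b) / 2"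
      using convex_onD[OF cv, of "1/2" a b] by (simp add: algebra_simps)
    show "G ((1/2) *\<^sub>R (a + b)) \<le> (G a + G b) / 2 - 1 / (8 * l) * (norm (a - b))\<^sup>2"
    proof -
      have eq: "((Na + Nb)/2 - D/4)/(2*l) = (Na/(2*l) + Nb/(2*l))/2 - 1/(8*l)*D" for Na Nb D
        using l by (simp add: field_simps)
      have key: "\<And>F A B X Y Z::real. F \<le> (A+B)/2 \<Longrightarrow> F + ((X+Y)/2 - Z) \<le> (A + X + (B + Y))/2 - Z" by (simp add: field_simps)
      show ?thesis unfolding G_def mid_norm eq by (rule key[OF fm])
    qed
  qed auto
  hence "\<exists>!p. \<forall>q. G p \<le> G q" by simp
  from theI'[OF this] show ?thesis unfolding prox_def G_def by simp
qed

lemma le_by_small: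
  fixes a b c :: real
  assumes "c \<ge> 0" "\<And>t. 0 < t \<Longrightarrow> t \<le> 1 \<Longrightarrow> a \<le> b + t * c"
  shows "a \<le> b"
proof (rule ccontr)
  assume "\<not> a \<le> b"
  define t where "t = min 1 ((a - b) / (2 * (c + 1)))"
  have t: "0 < t" "t \<le> 1" using \<open>\<not> a \<le> b\<close> assms(1) by (auto simp: t_def)
  have "t * c \<le> (a - b) / (2 * (c + 1)) * c" using assms(1) by (intro mult_right_mono) (auto simp: t_def)
  also have "\<dots> < a - b"
  proof -
    have "0 < (a - b) * (c + 2)" using \<open>\<not> a \<le> b\<close> assms(1) by simp
    hence "0 < a * c + a * 2 - b * c - b * 2" by (simp add: algebra_simps)
    thus ?thesis using assms(1) by (simp add: field_simps)
  qed
  finally show False using assms(2)[OF t] by linarith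
qed

lemma aux_ineq:
  fixes l A B F N0 Nt t I n :: real
  assumes l: "l > 0" and h1: "A + N0/(2*l) \<le> F + Nt/(2*l)" and h2: "F \<le> (1-t)*A + t*B"
    and h3: "Nt = N0 - 2*t*I + t\<^sup>2*n"
  shows "0 \<le> 2*l*t*(B-A) - 2*t*I + t\<^sup>2*n"
proof -
  have "2*l*(A + N0/(2*l)) \<le> 2*l*(F + Nt/(2*l))" using h1 l by (intro mult_left_mono) auto
  hence a: "2*l*A + N0 \<le> 2*l*F + Nt" using l by (simp add: distrib_left)
  have b: "2*l*F \<le> 2*l*((1-t)*A + t*B)" using h2 l by (intro mult_left_mono) auto
  have "2*l*((1-t)*A + t*B) = 2*l*A - 2*l*t*A + 2*l*t*B" by (simp add: algebra_simps)
  with a b h3 have "0 \<le> 2*l*t*B - 2*l*t*A - 2*t*I + t\<^sup>2*n" by linarith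
  thus ?thesis by (simp add: algebra_simps)
qed

lemma prox_var:
  fixes f :: "'a::real_inner \<Rightarrow> real"
  assumes l: "l > 0" and cv: "convex_on UNIV f"
    and mn: "\<forall>q. f p + (norm (v - p))\<^sup>2 / (2 * l) \<le> f q + (norm (v - q))\<^sup>2 / (2 * l)"
  shows "inner (v - p) (q - p) \<le> l * (f q - f p)"
proof (rule le_by_small[where c="(norm (q - p))\<^sup>2 / 2"])
  fix t :: real assume t: "0 < t" "t \<le> 1"
  have c: "f ((1 - t) *\<^sub>R p + t *\<^sub>R q) \<le> (1 - t) * f p + t * f q"
    using convex_onD[OF cv, of t p q] t by simp
  have e: "(1 - t) *\<^sub>R p + t *\<^sub>R q = p + t *\<^sub>R (q - p)" by (simp add: algebra_simps)
  have n: "(norm (v - (p + t *\<^sub>R (q - p))))\<^sup>2 = (norm (v - p))\<^sup>2 - 2 * t * inner (v - p) (q - p) + t\<^sup>2 * (norm (q - p))\<^sup>2"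
  proof -
    have eqv: "v - (p + t *\<^sub>R (q - p)) = (v - p) - t *\<^sub>R (q - p)" by (simp add: algebra_simps)
    show ?thesis unfolding eqv power2_norm_eq_inner by (simp add: inner_diff_left inner_diff_right inner_commute power2_eq_square algebra_simps)
  qed
  have "f p + (norm (v - p))\<^sup>2 / (2 * l) \<le> f (p + t *\<^sub>R (q - p)) + (norm (v - (p + t *\<^sub>R (q - p))))\<^sup>2 / (2 * l)"
    using mn by blast
  hence "0 \<le> 2 * l * t * (f q - f p) - 2 * t * inner (v - p) (q - p) + t\<^sup>2 * (norm (q - p))\<^sup>2"
    using aux_ineq[OF l _ c[unfolded e] n] by blast
  hence "0 \<le> t * (2 * l * (f q - f p) - 2 * inner (v - p) (q - p) + t * (norm (q - p))\<^sup>2)"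
    by (simp add: algebra_simps power2_eq_square)
  hence "0 \<le> 2 * l * (f q - f p) - 2 * inner (v - p) (q - p) + t * (norm (q - p))\<^sup>2"
    using t by (simp add: zero_le_mult_iff)
  thus "inner (v - p) (q - p) \<le> l * (f q - f p) + t * ((norm (q - p))\<^sup>2 / 2)" by simp
qed simp

lemma prox_bound:
  fixes f :: "'a::{real_inner,complete_space} \<Rightarrow> real"
  assumes l: "l > 0" and cv: "convex_on UNIV f" and ct: "continuous_on UNIV f"
    and k: "\<kappa> > 0" "\<And>p. f p \<ge> f 0 - 1 - \<kappa> * norm p"
  shows "norm (prox l f v) \<le> max 1 (norm v + l * \<kappa> + l)"
proof -
  define p where "p = prox l f v"
  have vi: "inner (v - p) (0 - p) \<le> l * (f 0 - f p)"
    using prox_var[OF l cv prox_min[OF l cv ct, of v]] unfolding p_def by blast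
  have "l * (f 0 - f p) \<le> l * (1 + \<kappa> * norm p)" using k(2)[of p] l by simp
  moreover have "inner (v - p) (0 - p) = (norm p)\<^sup>2 - inner v p"
    by (simp add: power2_norm_eq_inner inner_diff_left inner_diff_right inner_commute)
  moreover have "inner v p \<le> norm v * norm p" by (rule norm_cauchy_schwarz)
  ultimately have q: "(norm p)\<^sup>2 \<le> norm v * norm p + l + l * \<kappa> * norm p" using vi by (simp add: algebra_simps)
  show ?thesis
  proof (cases "norm p \<le> 1")
    case False
    hence "l \<le> l * norm p" using l by simp
    hence "norm p * norm p \<le> norm p * (norm v + l * \<kappa> + l)" using q by (simp add: algebra_simps power2_eq_square)
    moreover have "norm p > 0" using False by linarith
    ultimately have "norm p \<le> norm v + l * \<kappa> + l" by simp
    thus ?thesis unfolding p_def by simp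
  qed (simp add: p_def)
qed


theorem lemma1:
  fixes M :: nat
    and f h :: "nat \<Rightarrow> 'a::{real_inner, complete_space} \<Rightarrow> real"
    and gh :: "nat \<Rightarrow> 'a \<Rightarrow> 'a"
    and L :: "nat \<Rightarrow> real"
    and T :: "nat \<Rightarrow> 'a \<Rightarrow> 'a"
    and X :: "nat \<Rightarrow> 'a set"
    and \<theta> lam \<beta> \<alpha> :: "nat \<Rightarrow> real"
    and u :: "nat \<Rightarrow> 'a"
    and x :: "nat \<Rightarrow> 'a"
    and w z d y :: "nat \<Rightarrow> nat \<Rightarrow> 'a"
    and proj_on_y :: bool
  assumes M: "M \<ge> 1"
    \<comment> \<open>(A1)\<close>
    and A1: "\<And>i. i \<in> {1..M} \<Longrightarrow> continuous_on UNIV (f i) \<and> convex_on UNIV (f i)"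
    \<comment> \<open>(A2): gh i is the gradient of h i, (1/L i)-Lipschitz\<close>
    and A2_convex: "\<And>i. i \<in> {1..M} \<Longrightarrow> convex_on UNIV (h i)"
    and A2_grad: "\<And>i p. i \<in> {1..M} \<Longrightarrow> (h i has_derivative (\<lambda>v. inner (gh i p) v)) (at p)"
    and A2_L: "\<And>i. i \<in> {1..M} \<Longrightarrow> L i > 0"
    and A2_lip: "\<And>i p q. i \<in> {1..M} \<Longrightarrow> norm (gh i p - gh i q) \<le> (1 / L i) * norm (p - q)"
    \<comment> \<open>(A3)\<close>
    and A3: "\<And>i. i \<in> {1..M} \<Longrightarrow> firmly_nonexpansive (T i)"
    \<comment> \<open>(A4)\<close>
    and A4_S: "(\<Inter>i\<in>{1..M}. {p. T i p = p}) \<noteq> {}"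
    and A4_Omega: "\<exists>xh \<in> (\<Inter>i\<in>{1..M}. {p. T i p = p}).
                    \<forall>p \<in> (\<Inter>i\<in>{1..M}. {p. T i p = p}).
                      (\<Sum>i\<in>{1..M}. f i xh + h i xh) \<le> (\<Sum>i\<in>{1..M}. f i p + h i p)"
    \<comment> \<open>Condition (C)\<close>
    and C_dec: "\<And>n. n \<ge> 1 \<Longrightarrow> \<theta> (Suc n) \<le> \<theta> n \<and> lam (Suc n) \<le> lam n \<and> \<beta> (Suc n) \<le> \<beta> n \<and> \<alpha> (Suc n) \<le> \<alpha> n"
    and C_lim: "\<theta> \<longlonglongrightarrow> 0" "lam \<longlonglongrightarrow> 0" "\<beta> \<longlonglongrightarrow> 0" "\<alpha> \<longlonglongrightarrow> 0"
    and C_theta: "\<And>n. n \<ge> 1 \<Longrightarrow> 0 \<le> \<theta> n \<and> \<theta> n < 1"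
    and C_lambda: "\<And>n. n \<ge> 1 \<Longrightarrow> 0 < lam n \<and> (\<forall>i\<in>{1..M}. lam n \<le> 2 * L i)"
    and C_beta: "\<And>n. n \<ge> 1 \<Longrightarrow> 0 < \<beta> n \<and> \<beta> n \<le> 1"
    and C_alpha: "\<And>n. n \<ge> 1 \<Longrightarrow> 0 < \<alpha> n \<and> \<alpha> n \<le> 1"
    and C1: "\<not> summable (\<lambda>n. \<alpha> (Suc n))"
    and C2: "(\<lambda>n. (1 / \<alpha> (Suc n)) * \<bar>1 / lam (Suc n) - 1 / lam n\<bar>) \<longlonglongrightarrow> 0"
    and C3: "(\<lambda>n. (1 / lam (Suc n)) * \<bar>1 - \<alpha> n / \<alpha> (Suc n)\<bar>) \<longlonglongrightarrow> 0"
    and C4: "(\<lambda>n. \<alpha> n / lam n) \<longlonglongrightarrow> 0"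
    and C5: "(\<lambda>n. \<theta> n / (\<alpha> (Suc n) * lam (Suc n))) \<longlonglongrightarrow> 0"
    and C6: "\<exists>\<sigma>\<ge>1. \<forall>n\<ge>1. lam n / lam (Suc n) \<le> \<sigma>"
    and C7: "(\<lambda>n. \<beta> n / \<alpha> (Suc n)) \<longlonglongrightarrow> 0"
    \<comment> \<open>the sets X i\<close>
    and X: "\<And>i. i \<in> {1..M} \<Longrightarrow> bounded (X i) \<and> closed (X i) \<and> convex (X i)
                                   \<and> (\<Inter>j\<in>{1..M}. {p. T j p = p}) \<subseteq> X i"
    \<comment> \<open>the algorithm (modified in one of the two ways, selected by proj_on_y)\<close>
    and alg_d1: "\<And>i. i \<in> {1..M} \<Longrightarrow> d i 1 = - gh i (z i 0)"
    and alg_w1: "\<And>n. n \<ge> 1 \<Longrightarrow> w 1 n = x n"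
    and alg_z: "\<And>i n. i \<in> {1..M} \<Longrightarrow> n \<ge> 1 \<Longrightarrow>
                  z i n = w i n + \<theta> n *\<^sub>R (w i n - w i (n - 1))"
    and alg_d: "\<And>i n. i \<in> {1..M} \<Longrightarrow> n \<ge> 1 \<Longrightarrow>
                  d i (Suc n) = - gh i (z i n) + \<beta> n *\<^sub>R d i n"
    and alg_y: "\<And>i n. i \<in> {1..M} \<Longrightarrow> n \<ge> 1 \<Longrightarrow>
                  y i n = (if proj_on_y
                           then metric_proj (X i) (prox (lam n) (f i) (z i n + lam n *\<^sub>R d i (Suc n)))
                           else prox (lam n) (f i) (z i n + lam n *\<^sub>R d i (Suc n)))"
    and alg_w: "\<And>i n. i \<in> {1..M} \<Longrightarrow> n \<ge> 1 \<Longrightarrow>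
                  w (Suc i) n = (if proj_on_y
                                 then \<alpha> n *\<^sub>R u i + (1 - \<alpha> n) *\<^sub>R T i (y i n)
                                 else metric_proj (X i) (\<alpha> n *\<^sub>R u i + (1 - \<alpha> n) *\<^sub>R T i (y i n)))"
    and alg_x: "\<And>n. n \<ge> 1 \<Longrightarrow> x (Suc n) = w (Suc M) n"
  shows "\<forall>i\<in>{1..M}. bounded ((\<lambda>n. y i n) ` {1..})"
proof (intro ballI)
  fix i assume i: "i \<in> {1..M}"
  have Xne: "X j \<noteq> {}" if "j \<in> {1..M}" for j using X[OF that] A4_S by blast
  have mp: "metric_proj (X j) v \<in> X j" if "j \<in> {1..M}" for j v
    using metric_proj_in[of "X j" v] X[OF that] Xne[OF that] by blast
  have Xb: "\<exists>R. \<forall>p\<in>X j. norm p \<le> R" if "j \<in> {1..M}" for j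
    using X[OF that] bounded_iff by blast
  show "bounded ((\<lambda>n. y i n) ` {1..})"
  proof (cases proj_on_y)
    case True
    have "(\<lambda>n. y i n) ` {1..} \<subseteq> X i" using alg_y[OF i] True mp[OF i] by auto
    thus ?thesis using X[OF i] bounded_subset by blast
  next
    case False
    have wX: "w (Suc j) n \<in> X j" if "j \<in> {1..M}" "n \<ge> 1" for j n
      using alg_w[OF that] False mp[OF that(1)] by simp
    have "\<exists>B. \<forall>n. norm (w i n) \<le> B"
    proof (cases "i = 1")
      case True
      obtain R where R: "\<forall>p\<in>X M. norm p \<le> R" using Xb[of M] M by auto
      show ?thesis
      proof (intro exI allI)
        fix n
        show "norm (w i n) \<le> max (max (norm (w 1 0)) (norm (x 1))) R"
        proof (cases n)
          case 0 then show ?thesis by (simp add: True)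
        next
          case (Suc m)
          show ?thesis
          proof (cases m)
            case 0 then show ?thesis using alg_w1[of 1] Suc True by simp
          next
            case (Suc k)
            have "w i n = x (Suc (Suc k))" using alg_w1[of n] \<open>n = Suc m\<close> Suc True by simp
            also have "\<dots> = w (Suc M) (Suc k)" using alg_x[of "Suc k"] by simp
            finally have "w i n \<in> X M" using wX[of M "Suc k"] M by simp
            thus ?thesis using R by fastforce
          qed
        qed
      qed
    next
      case False
      then obtain j where j: "i = Suc j" "j \<in> {1..M}" using i by (cases i) auto
      obtain R where R: "\<forall>p\<in>X j. norm p \<le> R" using Xb[OF j(2)] by auto
      show ?thesis
      proof (intro exI allI)
        fix n
        show "norm (w i n) \<le> max (norm (w i 0)) R"
        proof (cases n)
          case 0 then show ?thesis by simp
        next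
          case (Suc m)
          have "w i n \<in> X j" using wX[OF j(2), of n] j(1) Suc by simp
          thus ?thesis using R by fastforce
        qed
      qed
    qed
    then obtain B where B: "\<And>n. norm (w i n) \<le> B" by blast
    have B0: "B \<ge> 0" using B[of 0] norm_ge_zero order_trans by blast
    have zb: "norm (z i n) \<le> 3 * B" if n: "n \<ge> 1" for n
    proof -
      have th: "0 \<le> \<theta> n" "\<theta> n < 1" using C_theta[OF n] by auto
      have "norm (z i n) \<le> norm (w i n) + norm (\<theta> n *\<^sub>R (w i n - w i (n - 1)))"
        unfolding alg_z[OF i n] by (rule norm_triangle_ineq)
      also have "norm (\<theta> n *\<^sub>R (w i n - w i (n - 1))) = \<theta> n * norm (w i n - w i (n - 1))"
        using th by simp
      also have "norm (w i n - w i (n - 1)) \<le> 2 * B"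
        using norm_triangle_ineq4[of "w i n" "w i (n - 1)"] B[of n] B[of "n - 1"] by linarith
      hence "\<theta> n * norm (w i n - w i (n - 1)) \<le> 1 * (2 * B)"
        using th B0 by (intro mult_mono) auto
      finally show ?thesis using B[of n] by linarith
    qed
    have Lp: "L i > 0" using A2_L[OF i] .
    define K where "K = norm (gh i 0) + 3 * B / L i"
    have gb: "norm (gh i (z i n)) \<le> K" if n: "n \<ge> 1" for n
    proof -
      have "norm (gh i (z i n)) \<le> norm (gh i 0) + norm (gh i (z i n) - gh i 0)"
        by (metis add.commute diff_add_cancel norm_triangle_ineq)
      also have "norm (gh i (z i n) - gh i 0) \<le> (1 / L i) * norm (z i n - 0)" using A2_lip[OF i] .
      also have "(1 / L i) * norm (z i n - 0) \<le> (1 / L i) * (3 * B)"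
        using zb[OF n] Lp by (intro mult_left_mono) auto
      finally show ?thesis unfolding K_def by simp
    qed
    have K0: "K \<ge> 0" unfolding K_def using B0 Lp by simp
    obtain N where N: "\<And>n. n \<ge> N \<Longrightarrow> \<beta> n < 1/2"
      using order_tendstoD(2)[OF C_lim(3), of "1/2"] unfolding eventually_sequentially by auto
    define N' where "N' = max N 1"
    define D where "D = max (2 * K) (Max ((\<lambda>k. norm (d i k)) ` {..N'}))"
    have dsmall: "norm (d i k) \<le> D" if "k \<le> N'" for k
    proof -
      have "norm (d i k) \<le> Max ((\<lambda>k. norm (d i k)) ` {..N'})" using that by (intro Max_ge) auto
      thus ?thesis unfolding D_def by linarith
    qed
    have db: "norm (d i n) \<le> D" for n
    proof (induction n)
      case 0 then show ?case using dsmall[of 0] by simp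
    next
      case (Suc m)
      show ?case
      proof (cases "Suc m \<le> N'")
        case True then show ?thesis using dsmall by blast
      next
        case False
        hence m: "m \<ge> 1" "m \<ge> N" unfolding N'_def by auto
        have bm: "0 \<le> \<beta> m" "\<beta> m \<le> 1/2" using C_beta[OF m(1)] N[OF m(2)] by auto
        have "norm (d i (Suc m)) \<le> norm (gh i (z i m)) + norm (\<beta> m *\<^sub>R d i m)"
          unfolding alg_d[OF i m(1)] by (metis norm_minus_cancel norm_triangle_ineq)
        also have "norm (\<beta> m *\<^sub>R d i m) = \<beta> m * norm (d i m)" using bm by simp
        also have "\<beta> m * norm (d i m) \<le> (1/2) * D" using bm Suc.IH by (intro mult_mono) auto
        finally show ?thesis using gb[OF m(1)] unfolding D_def by linarith
      qed
    qed
    have D0: "D \<ge> 0" using db[of 0] norm_ge_zero order_trans by blast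
    have lamS: "lam (Suc k) \<le> lam 1" for k
    proof (induction k)
      case (Suc k) then show ?case using C_dec[of "Suc k"] by simp
    qed simp
    have lb: "lam n \<le> lam 1" "0 < lam n" if "n \<ge> 1" for n
    proof -
      obtain k where "n = Suc k" using \<open>n \<ge> 1\<close> by (cases n) auto
      thus "lam n \<le> lam 1" using lamS by simp
      show "0 < lam n" using C_lambda[OF that] by simp
    qed
    define V where "V = 3 * B + lam 1 * D"
    have vb: "norm (z i n + lam n *\<^sub>R d i (Suc n)) \<le> V" if n: "n \<ge> 1" for n
    proof -
      have "norm (z i n + lam n *\<^sub>R d i (Suc n)) \<le> norm (z i n) + norm (lam n *\<^sub>R d i (Suc n))"
        by (rule norm_triangle_ineq)
      also have "norm (lam n *\<^sub>R d i (Suc n)) = lam n * norm (d i (Suc n))" using lb[OF n] by simp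
      also have "lam n * norm (d i (Suc n)) \<le> lam 1 * D" using lb[OF n] db D0 by (intro mult_mono) auto
      finally show ?thesis unfolding V_def using zb[OF n] by linarith
    qed
    have cv: "convex_on UNIV (f i)" and ct: "continuous_on UNIV (f i)" using A1[OF i] by auto
    obtain \<kappa> where k: "\<kappa> > 0" "\<And>p. f i p \<ge> f i 0 - 1 - \<kappa> * norm p"
      using convex_lower_bound[OF cv ct] by blast
    have yb: "norm (y i n) \<le> max 1 (V + lam 1 * \<kappa> + lam 1)" if n: "n \<ge> 1" for n
    proof -
      have "y i n = prox (lam n) (f i) (z i n + lam n *\<^sub>R d i (Suc n))" using alg_y[OF i n] False by simp
      hence "norm (y i n) \<le> max 1 (norm (z i n + lam n *\<^sub>R d i (Suc n)) + lam n * \<kappa> + lam n)"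
        using prox_bound[OF lb(2)[OF n] cv ct k] by simp
      moreover have "lam n * \<kappa> \<le> lam 1 * \<kappa>" using lb[OF n] k(1) by (intro mult_right_mono) auto
      ultimately show ?thesis using vb[OF n] lb[OF n] by linarith
    qed
    show ?thesis unfolding bounded_iff using yb by auto
  qed
qed

end
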